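(* Let $a<b$, $c<d$ be real numbers and $C\in\mathbb{R}\setminus\{0\}$. Let $(p_n)_{n\in\mathbb{N}_0}$ and $(q_n)_{n\in\mathbb{N}_0}$ be real sequences with $p_0=q_0$ such that the power series $\sigma(s)=\sum_{n\ge 0}p_n(s-a)^n$ and $\tau(t)=\sum_{n\ge0}q_n(t-c)^n$ converge uniformly on $[a,b]$ and $[c,d]$ respectively. Let $k:[a,b]\times[c,d]\to\mathbb{R}$ be the solution of the Goursat problem $$\frac{\partial^2 k}{\partial s\,\partial t}=Ck \text{ on } [a,b]\times[c,d],\qquad k(s,c)=\sigma(s),\quad k(a,t)=\tau(t).$$ Then, writing $\Delta_{a,b}=b-a$ and $\Delta_{c,d}=d-c$, one has $k(s,d)=\sum_{n\ge0}\tilde p_n(s-a)^n$ for $s\in[a,b]$ and $k(b,t)=\sum_{n\ge0}\tilde q_n(t-c)^n$ for $t\in[c,d]$, where for all $n\in\mathbb{N}_0$ $$\tilde p_n=\sum_{k=0}^{n}p_k\frac{(C\Delta_{c,d})^{n-k}\,k!}{(n-k)!\,n!}+\sum_{k=1}^{\infty}q_k\frac{C^n\Delta_{c,d}^{\,n+k}\,k!}{(n+k)!\,n!},$$ $$\tilde q_n=\sum_{k=0}^{n}q_k\frac{(C\Delta_{a,b})^{n-k}\,k!}{(n-k)!\,n!}+\sum_{k=1}^{\infty}p_k\frac{C^n\Delta_{a,b}^{\,n+k}\,k!}{(n+k)!\,n!}.$$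
   Context: By the solution of the Goursat problem is meant the continuous function $k$ on $[a,b]\times[c,d]$ satisfying $k(s,t)=\sigma(s)+\tau(t)-\sigma(a)+C\int_a^s\int_c^t k(r,w)\,dw\,dr$ for all $(s,t)$ in the rectangle (equivalently, the classical solution given by the Riemann-function representation with $I_0$, the zero-order modified Bessel function of the first kind). *)

theory Defs
  imports "HOL-Analysis.Analysis"
begin

text \<open>Solution of the Goursat problem k_st = C k on [a,b] x [c,d], k(s,c) = sigma(s),
  k(a,t) = tau(t): the continuous function on the rectangle satisfying the
  integral equation k(s,t) = sigma(s) + tau(t) - sigma(a) + C int_a^s int_c^t k.\<close>
definition goursat_solution ::
  "real \<Rightarrow> real \<Rightarrow> real \<Rightarrow> real \<Rightarrow> real \<Rightarrow> (real \<Rightarrow> real) \<Rightarrow> (real \<Rightarrow> real)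
     \<Rightarrow> (real \<Rightarrow> real \<Rightarrow> real) \<Rightarrow> bool" where
  "goursat_solution a b c d C \<sigma> \<tau> k \<longleftrightarrow>
     continuous_on ({a..b} \<times> {c..d}) (\<lambda>x. k (fst x) (snd x)) \<and>
     (\<forall>s\<in>{a..b}. \<forall>t\<in>{c..d}.
        k s t = \<sigma> s + \<tau> t - \<sigma> a
                + C * integral {a..s} (\<lambda>r. integral {c..t} (\<lambda>w. k r w)))"

text \<open>The coefficient formula: for the side s=d use goursat_coeff C (d-c) p q,
  for the side t=b use goursat_coeff C (b-a) q p. The infinite sum runs over
  k >= 1, written with k = j+1.\<close>
definition goursat_coeff ::
  "real \<Rightarrow> real \<Rightarrow> (nat \<Rightarrow> real) \<Rightarrow> (nat \<Rightarrow> real) \<Rightarrow> nat \<Rightarrow> real" where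
  "goursat_coeff C \<Delta> p q n =
     (\<Sum>k\<le>n. p k * (C * \<Delta>) ^ (n - k) * fact k / (fact (n - k) * fact n))
     + (\<Sum>j. q (j + 1) * C ^ n * \<Delta> ^ (n + (j + 1)) * fact (j + 1)
              / (fact (n + (j + 1)) * fact n))"

end

theory Submission
  imports Defs
begin


lemma fact_ratio_bound:
  "fact m / fact (m + (j + 2)) \<le> inverse (real (Suc m) ^ 2)"
proof -
  have "fact (m + 2) \<le> (fact (m + (j+2)) :: real)" by (intro fact_mono) auto
  moreover have "(fact (m+2) :: real) = fact m * (real m + 1) * (real m + 2)"
    by (simp add: fact_Suc algebra_simps numeral_2_eq_2)
  moreover have "fact m * (real m + 1)^2 \<le> fact m * (real m + 1) * (real m + 2)"
    by (simp add: power2_eq_square mult.assoc)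
  ultimately have "fact m * (real m + 1)^2 \<le> fact (m + (j+2))" by linarith
  moreover have "fact m > (0::real)" by simp
  ultimately have "fact m / fact (m + (j+2)) \<le> fact m / (fact m * (real m + 1)^2)"
    by (intro divide_left_mono) auto
  also have "\<dots> = inverse (real (Suc m) ^ 2)" by (simp add: field_simps)
  finally show ?thesis .
qed

lemma summable_inv_sq: "summable (\<lambda>m. inverse (real (Suc m) ^ 2))"
  using inverse_power_summable[of 2, where 'a=real] summable_Suc_iff[where f="\<lambda>n. inverse (real n ^ 2)"]
  by simp

lemma diag_part3:
  fixes G :: "nat \<times> nat \<Rightarrow> real" and B c :: "nat \<Rightarrow> real"
  assumes B: "summable B" "\<And>j. B j \<ge> 0" and cc: "summable c" "\<And>m. c m \<ge> 0"
    and bound: "\<And>j m. norm (G (j, m)) \<le> B j * c m"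
    and rows: "\<And>j. (\<lambda>m. G (j, m)) sums W j"
  shows "\<exists>S. W sums S \<and> (\<lambda>n. \<Sum>i\<le>n. G (i, n - i)) sums S"
proof -
  define g where "g = (\<lambda>(j::nat, m::nat). B j * c m)"
  have gnn: "\<And>x. g x \<ge> 0" using B cc by (auto simp: g_def)
  have cs: "c summable_on UNIV" using cc summable_on_UNIV_nonneg_real_iff by blast
  have "(\<lambda>x. norm (g x)) summable_on Sigma UNIV (\<lambda>_. UNIV)"
  proof (rule Infinite_Sum.abs_summable_on_Sigma_iff[THEN iffD2], intro conjI ballI)
    fix j :: nat
    show "(\<lambda>m. norm (g (j, m))) summable_on UNIV"
      using summable_on_cmult_right[OF cs, of "B j"] B cc by (simp add: g_def abs_mult)
  next
    have eq: "infsum (\<lambda>m. norm (g (j, m))) UNIV = B j * infsum c UNIV" for j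
      using B cc by (simp add: g_def abs_mult infsum_cmult_right')
    moreover have "(\<lambda>j. norm (B j * infsum c UNIV)) summable_on UNIV"
    proof -
      have "B summable_on UNIV" using B summable_on_UNIV_nonneg_real_iff by blast
      then have "(\<lambda>j. B j * infsum c UNIV) summable_on UNIV"
        by (rule summable_on_cmult_left)
      moreover have "infsum c UNIV \<ge> 0" using cc by (simp add: infsum_nonneg)
      ultimately show ?thesis using B by (simp add: abs_mult)
    qed
    ultimately show "(\<lambda>j. norm (infsum (\<lambda>m. norm (g (j, m))) UNIV)) summable_on UNIV"
      by (simp only: eq)
  qed
  then have g': "(\<lambda>x. norm (g x)) summable_on UNIV" by simp
  have "(\<lambda>x. norm (G x)) summable_on UNIV"
  proof (rule Infinite_Sum.abs_summable_on_comparison_test[OF g'])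
    fix x :: "nat \<times> nat"
    show "norm (G x) \<le> norm (g x)" using bound[of "fst x" "snd x"] gnn[of x]
      by (cases x) (simp add: g_def)
  qed
  then have "G summable_on UNIV" by (rule abs_summable_summable)
  then obtain S where GS: "(G has_sum S) UNIV" by (auto simp: summable_on_def)
  have rowh: "((\<lambda>m. G (j, m)) has_sum W j) UNIV" for j
  proof (rule norm_summable_imp_has_sum[OF _ rows])
    show "summable (\<lambda>m. norm (G (j, m)))"
      by (rule summable_comparison_test[of _ "\<lambda>m. B j * c m"])
         (use bound cc in \<open>auto intro: summable_mult\<close>)
  qed
  have "(W has_sum S) UNIV"
    by (rule has_sum_SigmaD[where B="\<lambda>_. UNIV"]) (use GS rowh in auto)
  then have WS: "W sums S" by (rule has_sum_imp_sums)
  have "((\<lambda>x. G (snd x, fst x - snd x)) has_sum S) (Sigma UNIV (\<lambda>n. {..n}))"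
    by (subst has_sum_reindex_bij_witness[where j="\<lambda>(n,i). (i, n - i)" and i="\<lambda>(x,m). (x+m, x)"
        and T=UNIV and h=G and s'=S]) (use GS in auto)
  then have "((\<lambda>n. \<Sum>i\<le>n. G (i, n - i)) has_sum S) UNIV"
    by (rule has_sum_SigmaD) auto
  then have "(\<lambda>n. \<Sum>i\<le>n. G (i, n - i)) sums S" by (rule has_sum_imp_sums)
  with WS show "\<exists>S. W sums S \<and> (\<lambda>n. \<Sum>i\<le>n. G (i, n - i)) sums S" by blast
qed

lemma sums_SS:
  fixes f :: "nat \<Rightarrow> 'a::real_normed_vector"
  shows "(\<lambda>n. f (Suc (Suc n))) sums s \<longleftrightarrow> f sums (s + f 1 + f (0::nat))"
proof -
  have "(\<lambda>n. f (Suc (Suc n))) sums s \<longleftrightarrow> (\<lambda>n. f (Suc n)) sums (s + f 1)"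
    using sums_Suc_iff[of "\<lambda>n. f (Suc n)"] by simp
  also have "\<dots> \<longleftrightarrow> f sums (s + f 1 + f 0)" by (rule sums_Suc_iff)
  finally show ?thesis .
qed

lemma diag:
  fixes a :: "nat \<Rightarrow> real" and w M :: real
  assumes bnd: "\<And>m. \<bar>a m\<bar> \<le> M"
    and rows: "\<And>j. (\<lambda>m. a m * w ^ j * fact m / (fact j * fact (m + j))) sums V j"
  shows "(\<lambda>n. \<Sum>j\<le>n. a (n - j) * w ^ j * fact (n - j) / (fact j * fact n)) sums suminf V \<and> summable V"
proof -
  define T where "T m j = a m * w ^ j * fact m / (fact j * fact (m + j))" for m j
  define A where "A n = (\<Sum>j\<le>n. T (n - j) j)" for n
  have A_eq: "(\<Sum>j\<le>n. a (n - j) * w ^ j * fact (n - j) / (fact j * fact n)) = A n" for n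
    unfolding A_def T_def by (intro sum.cong) auto
  have M0: "M \<ge> 0" using bnd[of 0] by linarith
  define B where "B j = M * (inverse (fact (j+2)) * \<bar>w\<bar> ^ (j+2))" for j
  define cc where "cc m = inverse (real (Suc m) ^ 2)" for m
  have Bs: "summable B"
  proof -
    have "summable (\<lambda>j. inverse (fact (j+2)) * \<bar>w\<bar> ^ (j+2))"
      using summable_ignore_initial_segment[OF summable_exp[of "\<bar>w\<bar>"], of 2] by simp
    then show ?thesis unfolding B_def by (intro summable_mult) simp
  qed
  have B0: "B j \<ge> 0" for j using M0 by (simp add: B_def)
  have cs: "summable cc" unfolding cc_def by (rule summable_inv_sq)
  have c0: "cc m \<ge> 0" for m by (simp add: cc_def)
  have bound: "norm (T m (j+2)) \<le> B j * cc m" for j m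
  proof -
    have "norm (T m (j+2)) = \<bar>a m\<bar> * (inverse (fact (j+2)) * \<bar>w\<bar> ^ (j+2)) * (fact m / fact (m + (j+2)))"
      by (simp add: T_def abs_mult power_abs field_simps)
    also have "\<dots> \<le> M * (inverse (fact (j+2)) * \<bar>w\<bar> ^ (j+2)) * cc m"
      unfolding cc_def
      by (intro mult_mono fact_ratio_bound bnd) (use M0 in auto)
    finally show ?thesis by (simp add: B_def mult_ac)
  qed
  have rowsT: "(\<lambda>m. T m j) sums V j" for j unfolding T_def by (rule rows)
  have "\<exists>S. (\<lambda>j. V (j+2)) sums S \<and> (\<lambda>n. \<Sum>i\<le>n. (\<lambda>(j,m). T m (j+2)) (i, n - i)) sums S"
    by (rule diag_part3[OF Bs B0 cs c0]) (use bound rowsT in auto)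
  then obtain S3 where S3: "(\<lambda>j. V (j+2)) sums S3" "(\<lambda>n. \<Sum>i\<le>n. T (n - i) (i+2)) sums S3"
    by auto
  have VS: "V sums (S3 + V 1 + V 0)" using S3(1) sums_SS[of V S3] by simp
  have A2: "A (Suc (Suc n)) = T (Suc (Suc n)) 0 + T (Suc n) 1 + (\<Sum>i\<le>n. T (n - i) (i+2))" for n
    unfolding A_def by (simp only: sum.atMost_Suc_shift) (simp add: add_ac)
  have r0: "(\<lambda>n. T (Suc (Suc n)) 0) sums (V 0 - T 1 0 - T 0 0)"
    using sums_SS[of "\<lambda>m. T m 0" "V 0 - T 1 0 - T 0 0"] rows[of 0] unfolding T_def by simp
  have r1: "(\<lambda>n. T (Suc n) 1) sums (V 1 - T 0 1)"
    using sums_Suc_iff[of "\<lambda>m. T m 1" "V 1 - T 0 1"] rows[of 1] unfolding T_def by simp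
  have "(\<lambda>n. A (Suc (Suc n))) sums ((V 0 - T 1 0 - T 0 0) + (V 1 - T 0 1) + S3)"
    unfolding A2 by (intro sums_add r0 r1 S3(2))
  then have "A sums ((V 0 - T 1 0 - T 0 0) + (V 1 - T 0 1) + S3 + A 1 + A 0)"
    using sums_SS[of A] by simp
  moreover have "A 1 = T 1 0 + T 0 1" "A 0 = T 0 0" unfolding A_def by simp_all
  ultimately have "A sums (S3 + V 1 + V 0)" by (simp add: algebra_simps)
  then show ?thesis using VS A_eq by (simp add: sums_iff)
qed



lemma sum_rev_atMost: "(\<Sum>k\<le>(n::nat). f k) = (\<Sum>j\<le>n. f (n - j))"
  by (rule sum.reindex_bij_witness[where i="\<lambda>j. n - j" and j="\<lambda>k. n - k"]) auto

lemma endpoint: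
  fixes x D C K :: real and p q :: "nat \<Rightarrow> real" and Js Jt :: "nat \<Rightarrow> real"
  assumes q0: "p 0 = q 0"
    and H1: "\<And>j. (\<lambda>m. p m * fact m / fact (m + j) * x ^ (m + j)) sums Js j"
    and H2: "\<And>j. (\<lambda>l. q l * fact l / fact (l + j) * D ^ (l + j)) sums Jt j"
    and H3: "(\<lambda>j. C ^ j * (Js j * (D ^ j / fact j) + x ^ j / fact j * Jt j
                 - p 0 * (x ^ j / fact j) * (D ^ j / fact j))) sums K"
  shows "(\<lambda>n. goursat_coeff C D p q n * x ^ n) sums K"
proof -
  define a where "a m = p m * x ^ m" for m
  define w where "w = C * D * x"
  define V where "V j = C ^ j * D ^ j / fact j * Js j" for j
  have "a sums Js 0" using H1[of 0] by (simp add: a_def[abs_def])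
  then have "a \<longlonglongrightarrow> 0" by (intro summable_LIMSEQ_zero) (auto simp: sums_iff)
  then have "Bseq a" by (rule convergent_imp_Bseq[OF convergentI])
  then obtain M where M: "\<And>m. \<bar>a m\<bar> \<le> M" unfolding Bseq_def by auto
  have rows: "(\<lambda>m. a m * w ^ j * fact m / (fact j * fact (m + j))) sums V j" for j
  proof -
    have "(\<lambda>m. p m * fact m / fact (m + j) * x ^ (m + j) * (C ^ j * D ^ j / fact j)) sums (Js j * (C ^ j * D ^ j / fact j))"
      by (rule sums_mult2[OF H1])
    moreover have "p m * fact m / fact (m + j) * x ^ (m + j) * (C ^ j * D ^ j / fact j)
        = a m * w ^ j * fact m / (fact j * fact (m + j))" for m
      by (simp add: a_def w_def power_add power_mult_distrib field_simps)
    ultimately show ?thesis by (simp add: V_def mult_ac)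
  qed
  from diag[of a M w V, OF M rows]
  have A: "(\<lambda>n. \<Sum>j\<le>n. a (n - j) * w ^ j * fact (n - j) / (fact j * fact n)) sums suminf V"
    and sV: "summable V" by auto
  define A where "A n = (\<Sum>k\<le>n. p k * (C * D) ^ (n - k) * fact k / (fact (n - k) * fact n)) * x ^ n" for n
  have Aeq: "A n = (\<Sum>j\<le>n. a (n - j) * w ^ j * fact (n - j) / (fact j * fact n))" for n
  proof -
    have "A n = (\<Sum>k\<le>n. p k * (C * D) ^ (n - k) * fact k / (fact (n - k) * fact n) * x ^ n)"
      unfolding A_def by (simp add: sum_distrib_right)
    also have "\<dots> = (\<Sum>k\<le>n. a k * w ^ (n - k) * fact k / (fact (n - k) * fact n))"
    proof (intro sum.cong refl)
      fix k assume "k \<in> {..n}"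
      then have "x ^ n = x ^ k * x ^ (n - k)" by (simp add: power_add[symmetric])
      then show "p k * (C * D) ^ (n - k) * fact k / (fact (n - k) * fact n) * x ^ n
          = a k * w ^ (n - k) * fact k / (fact (n - k) * fact n)"
        by (simp add: a_def w_def power_mult_distrib)
    qed
    also have "\<dots> = (\<Sum>j\<le>n. a (n - j) * w ^ j * fact (n - j) / (fact j * fact n))"
      by (subst sum_rev_atMost) (intro sum.cong refl, auto)
    finally show ?thesis .
  qed
  define Bn where "Bn n = C ^ n / fact n * (Jt n - q 0 * D ^ n / fact n) * x ^ n" for n
  have Bsum: "(\<Sum>j. q (j + 1) * C ^ n * D ^ (n + (j + 1)) * fact (j + 1) / (fact (n + (j + 1)) * fact n))
      = C ^ n / fact n * (Jt n - q 0 * D ^ n / fact n)" for n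
  proof -
    have "(\<lambda>j. q (Suc j) * fact (Suc j) / fact (Suc j + n) * D ^ (Suc j + n)) sums (Jt n - q 0 * D ^ n / fact n)"
      using sums_Suc_iff[of "\<lambda>l. q l * fact l / fact (l + n) * D ^ (l + n)"] H2[of n] by simp
    from sums_mult[OF this, of "C ^ n / fact n"]
    have "(\<lambda>j. q (j + 1) * C ^ n * D ^ (n + (j + 1)) * fact (j + 1) / (fact (n + (j + 1)) * fact n))
       sums (C ^ n / fact n * (Jt n - q 0 * D ^ n / fact n))"
      by (simp add: field_simps add_ac)
    then show ?thesis by (rule sums_unique[symmetric])
  qed
  have coeq: "goursat_coeff C D p q n * x ^ n = A n + Bn n" for n
    unfolding goursat_coeff_def A_def Bn_def Bsum by (simp add: algebra_simps)
  have "(\<lambda>n. V n + Bn n) sums K"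
  proof -
    have "C ^ j * (Js j * (D ^ j / fact j) + x ^ j / fact j * Jt j - p 0 * (x ^ j / fact j) * (D ^ j / fact j))
        = V j + Bn j" for j
      unfolding V_def Bn_def q0 by (simp add: field_simps)
    then show ?thesis using H3 by simp
  qed
  from sums_diff[OF this summable_sums[OF sV]] have "Bn sums (K - suminf V)" by simp
  from sums_add[OF A this] have "(\<lambda>n. A n + Bn n) sums K" using Aeq by simp
  then show ?thesis using coeq by simp
qed



primrec Jit :: "real \<Rightarrow> (real \<Rightarrow> real) \<Rightarrow> nat \<Rightarrow> real \<Rightarrow> real" where
  "Jit a f 0 = f"
| "Jit a f (Suc j) = (\<lambda>s. integral {a..s} (Jit a f j))"

lemma Jit_cont:
  assumes "continuous_on {a..b} f"
  shows "continuous_on {a..b} (Jit a f j)"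
proof (induction j)
  case 0 then show ?case using assms by simp
next
  case (Suc j)
  then show ?case
    by (simp add: indefinite_integral_continuous_1 integrable_continuous_interval)
qed

lemma int_pow:
  fixes a s :: real
  assumes "a \<le> s"
  shows "((\<lambda>r. (r - a) ^ j) has_integral (s - a) ^ Suc j / real (Suc j)) {a..s}"
proof -
  have d: "((\<lambda>r. (r - a) ^ Suc j / real (Suc j)) has_real_derivative (r - a) ^ j) (at r within {a..s})" for r
  proof -
    have "((\<lambda>r. (r - a) ^ Suc j) has_real_derivative (1 + real j) * ((1 - 0) * (r - a) ^ j)) (at r within {a..s})"
      by (rule DERIV_power_Suc[OF DERIV_diff[OF DERIV_ident DERIV_const]])
    from DERIV_cdivide[OF this, of "real (Suc j)"] show ?thesis by simp
  qed
  have "((\<lambda>r. (r - a) ^ j) has_integral ((s - a) ^ Suc j / real (Suc j) - (a - a) ^ Suc j / real (Suc j))) {a..s}"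
    by (rule fundamental_theorem_of_calculus[OF assms])
       (use d in \<open>auto simp: has_real_derivative_iff_has_vector_derivative[symmetric]\<close>)
  then show ?thesis by simp
qed

lemma Jit_one:
  fixes a s :: real
  assumes "a \<le> s"
  shows "Jit a (\<lambda>_. 1) j s = (s - a) ^ j / fact j"
  using assms
proof (induction j arbitrary: s)
  case 0 then show ?case by simp
next
  case (Suc j)
  have "Jit a (\<lambda>_. 1) (Suc j) s = integral {a..s} (Jit a (\<lambda>_. 1) j)" by simp
  also have "\<dots> = integral {a..s} (\<lambda>r. (r - a) ^ j / fact j)"
    by (rule integral_cong) (use Suc.IH in auto)
  also have "\<dots> = (s - a) ^ Suc j / real (Suc j) / fact j"
    by (rule integral_unique, rule has_integral_divide, rule int_pow[OF Suc.prems])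
  also have "\<dots> = (s - a) ^ Suc j / fact (Suc j)"
    by (simp only: fact_Suc divide_divide_eq_left of_nat_fact mult.commute)
  finally show ?case .
qed

lemma unif_int:
  fixes a b :: real and f :: "nat \<Rightarrow> real \<Rightarrow> real" and g :: "real \<Rightarrow> real"
  assumes ab: "a \<le> b" and u: "uniform_limit {a..b} f g sequentially"
    and c: "\<And>n. continuous_on {a..b} (f n)"
  shows "uniform_limit {a..b} (\<lambda>n s. integral {a..s} (f n)) (\<lambda>s. integral {a..s} g) sequentially"
proof -
  have gc: "continuous_on {a..b} g"
    using uniform_limit_theorem[OF always_eventually[OF allI[OF c]] u] by simp
  show ?thesis unfolding uniform_limit_iff
  proof (intro allI impI)
    fix e :: real assume e: "e > 0"
    define e' where "e' = e / (b - a + 1)"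
    have e': "e' > 0" using e ab by (simp add: e'_def)
    from u e' have ev: "\<forall>\<^sub>F n in sequentially. \<forall>x\<in>{a..b}. dist (f n x) (g x) < e'"
      by (simp add: uniform_limit_iff)
    show "\<forall>\<^sub>F n in sequentially. \<forall>x\<in>{a..b}. dist (integral {a..x} (f n)) (integral {a..x} g) < e"
    proof (rule eventually_mono[OF ev], intro ballI)
      fix n s assume H: "\<forall>x\<in>{a..b}. dist (f n x) (g x) < e'" and s: "s \<in> {a..b}"
      have sub: "{a..s} \<subseteq> {a..b}" using s by auto
      have i1: "f n integrable_on {a..s}"
        by (rule integrable_continuous_interval, rule continuous_on_subset[OF c sub])
      have i2: "g integrable_on {a..s}"
        by (rule integrable_continuous_interval, rule continuous_on_subset[OF gc sub])
      have "dist (integral {a..s} (f n)) (integral {a..s} g) = norm (integral {a..s} (\<lambda>x. f n x - g x))"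
        using i1 i2 by (simp add: dist_norm integral_diff)
      also have "\<dots> \<le> integral {a..s} (\<lambda>x. e')"
        by (rule integral_norm_bound_integral)
           (use i1 i2 H sub in \<open>auto intro!: integrable_diff simp: dist_norm less_imp_le\<close>)
      also have "\<dots> = e' * (s - a)" using s by simp
      also have "\<dots> \<le> e' * (b - a)" using s e' by (intro mult_left_mono) auto
      also have "\<dots> < e" unfolding e'_def using e ab by (simp add: field_simps)
      finally show "dist (integral {a..s} (f n)) (integral {a..s} g) < e" .
    qed
  qed
qed

lemma Jit_series:
  fixes a b :: real and p :: "nat \<Rightarrow> real"
  assumes ab: "a \<le> b"
    and u: "uniform_limit {a..b} (\<lambda>N s. \<Sum>n<N. p n * (s - a) ^ n) \<sigma> sequentially"
  shows "uniform_limit {a..b} (\<lambda>N s. \<Sum>n<N. p n * fact n / fact (n + j) * (s - a) ^ (n + j)) (Jit a \<sigma> j) sequentially"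
proof (induction j)
  case 0 then show ?case using u by simp
next
  case (Suc j)
  have c: "continuous_on {a..b} (\<lambda>s. \<Sum>n<N. p n * fact n / fact (n + j) * (s - a) ^ (n + j))" for N
    by (intro continuous_intros)
  have U: "uniform_limit {a..b} (\<lambda>N s. integral {a..s} (\<lambda>s. \<Sum>n<N. p n * fact n / fact (n + j) * (s - a) ^ (n + j)))
      (\<lambda>s. integral {a..s} (Jit a \<sigma> j)) sequentially"
    by (rule unif_int[OF ab Suc c])
  have eq: "integral {a..s} (\<lambda>s. \<Sum>n<N. p n * fact n / fact (n + j) * (s - a) ^ (n + j))
      = (\<Sum>n<N. p n * fact n / fact (n + Suc j) * (s - a) ^ (n + Suc j))" if s: "s \<in> {a..b}" for N s
  proof -
    have hI: "((\<lambda>s. \<Sum>n<N. p n * fact n / fact (n + j) * (s - a) ^ (n + j)) has_integral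
        (\<Sum>n<N. p n * fact n / fact (n + j) * ((s - a) ^ Suc (n + j) / real (Suc (n + j))))) {a..s}"
      using s by (intro has_integral_sum has_integral_mult_right int_pow) auto
    have hE: "(\<Sum>n<N. p n * fact n / fact (n + j) * ((s - a) ^ Suc (n + j) / real (Suc (n + j))))
        = (\<Sum>n<N. p n * fact n / fact (n + Suc j) * (s - a) ^ (n + Suc j))"
      by (intro sum.cong refl) (simp add: field_simps)
    show ?thesis unfolding hE[symmetric] by (rule integral_unique[OF hI])
  qed
  show ?case
    by (rule uniform_limit_cong'[THEN iffD1, OF _ _ U]) (erule eq, simp)
qed



definition Iop :: "real \<Rightarrow> real \<Rightarrow> (real \<Rightarrow> real \<Rightarrow> real) \<Rightarrow> real \<Rightarrow> real \<Rightarrow> real" where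
  "Iop a c f s t = integral {a..s} (\<lambda>r. integral {c..t} (\<lambda>w. f r w))"

definition cont2 :: "real \<Rightarrow> real \<Rightarrow> real \<Rightarrow> real \<Rightarrow> (real \<Rightarrow> real \<Rightarrow> real) \<Rightarrow> bool" where
  "cont2 a b c d f \<longleftrightarrow> continuous_on ({a..b} \<times> {c..d}) (\<lambda>x. f (fst x) (snd x))"

lemma slice_cont:
  assumes "cont2 a b c d f" "r \<in> {a..b}"
  shows "continuous_on {c..d} (\<lambda>w. f r w)"
proof -
  have "continuous_on {c..d} (\<lambda>w. (\<lambda>x. f (fst x) (snd x)) (r, w))"
    by (rule continuous_on_compose2[OF assms(1)[unfolded cont2_def]])
       (use assms(2) in \<open>auto intro!: continuous_intros\<close>)
  then show ?thesis by simp
qed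

lemma slice_int:
  assumes "cont2 a b c d f" "r \<in> {a..b}" "t \<in> {c..d}"
  shows "(\<lambda>w. f r w) integrable_on {c..t}"
  by (rule integrable_continuous_interval, rule continuous_on_subset[OF slice_cont[OF assms(1,2)]])
     (use assms(3) in auto)

lemma outer_cont:
  assumes "cont2 a b c d f" "t \<in> {c..d}"
  shows "continuous_on {a..b} (\<lambda>r. integral {c..t} (\<lambda>w. f r w))"
proof -
  have "continuous_on ({a..b} \<times> cbox c t) (\<lambda>(x, w). f x w)"
  proof -
    have "continuous_on ({a..b} \<times> cbox c t) (\<lambda>x. f (fst x) (snd x))"
      by (rule continuous_on_subset[OF assms(1)[unfolded cont2_def]]) (use assms(2) in auto)
    then show ?thesis by (simp add: case_prod_beta')
  qed
  from integral_continuous_on_param[OF this] show ?thesis by simp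
qed

lemma outer_int:
  assumes "cont2 a b c d f" "s \<in> {a..b}" "t \<in> {c..d}"
  shows "(\<lambda>r. integral {c..t} (\<lambda>w. f r w)) integrable_on {a..s}"
  by (rule integrable_continuous_interval, rule continuous_on_subset[OF outer_cont[OF assms(1,3)]])
     (use assms(2) in auto)

lemma Iop_cmult: "Iop a c (\<lambda>r w. K * f r w) s t = K * Iop a c f s t"
  by (simp add: Iop_def)

lemma Iop_diff:
  assumes "cont2 a b c d f" "cont2 a b c d g" "s \<in> {a..b}" "t \<in> {c..d}"
  shows "Iop a c (\<lambda>r w. f r w - g r w) s t = Iop a c f s t - Iop a c g s t"
proof -
  have "Iop a c (\<lambda>r w. f r w - g r w) s t
      = integral {a..s} (\<lambda>r. integral {c..t} (\<lambda>w. f r w) - integral {c..t} (\<lambda>w. g r w))"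
    unfolding Iop_def
    by (intro integral_cong integral_diff slice_int[OF assms(1)] slice_int[OF assms(2)])
       (use assms in auto)
  also have "\<dots> = Iop a c f s t - Iop a c g s t"
    unfolding Iop_def by (intro integral_diff outer_int[OF assms(1,3,4)] outer_int[OF assms(2,3,4)])
  finally show ?thesis .
qed

lemma Iop_add:
  assumes "cont2 a b c d f" "cont2 a b c d g" "s \<in> {a..b}" "t \<in> {c..d}"
  shows "Iop a c (\<lambda>r w. f r w + g r w) s t = Iop a c f s t + Iop a c g s t"
proof -
  have "Iop a c (\<lambda>r w. f r w + g r w) s t
      = integral {a..s} (\<lambda>r. integral {c..t} (\<lambda>w. f r w) + integral {c..t} (\<lambda>w. g r w))"
    unfolding Iop_def
    by (intro integral_cong integral_add slice_int[OF assms(1)] slice_int[OF assms(2)])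
       (use assms in auto)
  also have "\<dots> = Iop a c f s t + Iop a c g s t"
    unfolding Iop_def by (intro integral_add outer_int[OF assms(1,3,4)] outer_int[OF assms(2,3,4)])
  finally show ?thesis .
qed

lemma cont2_sum:
  assumes "\<And>j. j \<in> A \<Longrightarrow> cont2 a b c d (f j)"
  shows "cont2 a b c d (\<lambda>r w. \<Sum>j\<in>A. f j r w)"
  using assms unfolding cont2_def by (intro continuous_on_sum) auto

lemma Iop_sum:
  assumes "\<And>j. j \<in> A \<Longrightarrow> cont2 a b c d (f j)" "finite A" "s \<in> {a..b}" "t \<in> {c..d}"
  shows "Iop a c (\<lambda>r w. \<Sum>j\<in>A. f j r w) s t = (\<Sum>j\<in>A. Iop a c (f j) s t)"
  using assms(2,1)
proof (induction A rule: finite_induct)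
  case empty then show ?case by (simp add: Iop_def)
next
  case (insert x F)
  have "Iop a c (\<lambda>r w. \<Sum>j\<in>insert x F. f j r w) s t = Iop a c (\<lambda>r w. f x r w + (\<Sum>j\<in>F. f j r w)) s t"
    using insert by simp
  also have "\<dots> = Iop a c (f x) s t + Iop a c (\<lambda>r w. \<Sum>j\<in>F. f j r w) s t"
    by (rule Iop_add) (use insert assms(3,4) in \<open>auto intro!: cont2_sum\<close>)
  finally show ?case using insert by simp
qed

lemma cont2_diff:
  "cont2 a b c d f \<Longrightarrow> cont2 a b c d g \<Longrightarrow> cont2 a b c d (\<lambda>r w. f r w - g r w)"
  unfolding cont2_def by (intro continuous_on_diff)

lemma cont2_add:
  "cont2 a b c d f \<Longrightarrow> cont2 a b c d g \<Longrightarrow> cont2 a b c d (\<lambda>r w. f r w + g r w)"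
  unfolding cont2_def by (intro continuous_on_add)

lemma cont2_cmult:
  "cont2 a b c d f \<Longrightarrow> cont2 a b c d (\<lambda>r w. K * f r w)"
  unfolding cont2_def by (intro continuous_on_mult continuous_on_const)

lemma cont2_sep:
  assumes X: "continuous_on {a..b} X" and Y: "continuous_on {c..d} Y"
  shows "cont2 a b c d (\<lambda>r w. X r * Y w)"
  unfolding cont2_def
proof (intro continuous_on_mult)
  show "continuous_on ({a..b} \<times> {c..d}) (\<lambda>x. X (fst x))"
    by (rule continuous_on_compose2[OF X continuous_on_fst]) auto
  show "continuous_on ({a..b} \<times> {c..d}) (\<lambda>x. Y (snd x))"
    by (rule continuous_on_compose2[OF Y continuous_on_snd]) auto
qed

lemma Iop_sep: "Iop a c (\<lambda>r w. X r * Y w) s t = integral {a..s} X * integral {c..t} Y"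
  by (simp add: Iop_def integral_mult_left)

lemma Iop_bound:
  assumes f: "cont2 a b c d f" and s: "s \<in> {a..b}" and t: "t \<in> {c..d}"
    and bnd: "\<And>r w. r \<in> {a..b} \<Longrightarrow> w \<in> {c..d} \<Longrightarrow> \<bar>f r w\<bar> \<le> K * ((r - a) ^ n * (w - c) ^ n)"
  shows "\<bar>Iop a c f s t\<bar> \<le> K * ((s - a) ^ Suc n * (t - c) ^ Suc n) / (real (Suc n))^2"
proof -
  have inner: "\<bar>integral {c..t} (\<lambda>w. f r w)\<bar> \<le> K * (r - a) ^ n * ((t - c) ^ Suc n / real (Suc n))"
    if r: "r \<in> {a..s}" for r
  proof -
    have rab: "r \<in> {a..b}" using r s by auto
    have hi: "((\<lambda>w. K * (r - a) ^ n * (w - c) ^ n) has_integral K * (r - a) ^ n * ((t - c) ^ Suc n / real (Suc n))) {c..t}"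
      by (intro has_integral_mult_right int_pow) (use t in auto)
    have "norm (integral {c..t} (\<lambda>w. f r w)) \<le> integral {c..t} (\<lambda>w. K * (r - a) ^ n * (w - c) ^ n)"
      by (rule integral_norm_bound_integral[OF slice_int[OF f rab t]])
         (use hi bnd rab t in \<open>auto simp: mult.assoc\<close>)
    then show ?thesis unfolding integral_unique[OF hi] real_norm_def .
  qed
  have ho: "((\<lambda>r. K * (r - a) ^ n * ((t - c) ^ Suc n / real (Suc n))) has_integral
      K * ((s - a) ^ Suc n / real (Suc n)) * ((t - c) ^ Suc n / real (Suc n))) {a..s}"
  proof -
    have "((\<lambda>r. (K * ((t - c) ^ Suc n / real (Suc n))) * (r - a) ^ n) has_integral
      (K * ((t - c) ^ Suc n / real (Suc n))) * ((s - a) ^ Suc n / real (Suc n))) {a..s}"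
      by (intro has_integral_mult_right int_pow) (use s in auto)
    then show ?thesis by (simp add: mult_ac)
  qed
  have "norm (Iop a c f s t) \<le> integral {a..s} (\<lambda>r. K * (r - a) ^ n * ((t - c) ^ Suc n / real (Suc n)))"
    unfolding Iop_def
    by (rule integral_norm_bound_integral[OF outer_int[OF f s t]]) (use ho inner in auto)
  also have "\<dots> = K * ((s - a) ^ Suc n / real (Suc n)) * ((t - c) ^ Suc n / real (Suc n))"
    by (rule integral_unique[OF ho])
  finally show ?thesis by (simp add: power2_eq_square field_simps)
qed



definition Gexp :: "real \<Rightarrow> real \<Rightarrow> real \<Rightarrow> (real \<Rightarrow> real) \<Rightarrow> (real \<Rightarrow> real) \<Rightarrow> real \<Rightarrow> nat \<Rightarrow> real \<Rightarrow> real \<Rightarrow> real" where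
  "Gexp a c C \<sigma> \<tau> p0 j s t = C ^ j * (Jit a \<sigma> j s * Jit c (\<lambda>_. 1) j t + Jit a (\<lambda>_. 1) j s * Jit c \<tau> j t
      - p0 * (Jit a (\<lambda>_. 1) j s * Jit c (\<lambda>_. 1) j t))"

lemma Gexp_cont:
  assumes sc: "continuous_on {a..b} \<sigma>" and tc: "continuous_on {c..d} \<tau>"
  shows "cont2 a b c d (Gexp a c C \<sigma> \<tau> p0 j)"
proof -
  have o1: "continuous_on {a..b} (\<lambda>_::real. 1::real)" "continuous_on {c..d} (\<lambda>_::real. 1::real)"
    by (auto intro: continuous_on_const)
  have "cont2 a b c d (\<lambda>r w. C ^ j * ((Jit a \<sigma> j r * Jit c (\<lambda>_. 1) j w + Jit a (\<lambda>_. 1) j r * Jit c \<tau> j w)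
      - p0 * (Jit a (\<lambda>_. 1) j r * Jit c (\<lambda>_. 1) j w)))"
    by (intro cont2_cmult cont2_diff cont2_add cont2_sep Jit_cont sc tc o1)
  moreover have "Gexp a c C \<sigma> \<tau> p0 j = (\<lambda>r w. C ^ j * ((Jit a \<sigma> j r * Jit c (\<lambda>_. 1) j w + Jit a (\<lambda>_. 1) j r * Jit c \<tau> j w)
      - p0 * (Jit a (\<lambda>_. 1) j r * Jit c (\<lambda>_. 1) j w)))"
    by (simp add: fun_eq_iff Gexp_def)
  ultimately show ?thesis by simp
qed

lemma Gexp_step:
  assumes sc: "continuous_on {a..b} \<sigma>" and tc: "continuous_on {c..d} \<tau>"
    and s: "s \<in> {a..b}" and t: "t \<in> {c..d}"
  shows "C * Iop a c (Gexp a c C \<sigma> \<tau> p0 j) s t = Gexp a c C \<sigma> \<tau> p0 (Suc j) s t"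
proof -
  have o1: "continuous_on {a..b} (\<lambda>_::real. 1::real)" "continuous_on {c..d} (\<lambda>_::real. 1::real)"
    by (auto intro: continuous_on_const)
  define f1 where "f1 r w = Jit a \<sigma> j r * Jit c (\<lambda>_. 1) j w" for r w
  define f2 where "f2 r w = Jit a (\<lambda>_. 1) j r * Jit c \<tau> j w" for r w
  define f3 where "f3 r w = Jit a (\<lambda>_. 1) j r * Jit c (\<lambda>_. 1) j w" for r w
  have c1: "cont2 a b c d f1" unfolding f1_def[abs_def] by (intro cont2_sep Jit_cont sc tc o1)
  have c2: "cont2 a b c d f2" unfolding f2_def[abs_def] by (intro cont2_sep Jit_cont sc tc o1)
  have c3: "cont2 a b c d f3" unfolding f3_def[abs_def] by (intro cont2_sep Jit_cont sc tc o1)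
  have "Gexp a c C \<sigma> \<tau> p0 j = (\<lambda>r w. C ^ j * ((\<lambda>r w. f1 r w + f2 r w) r w - (\<lambda>r w. p0 * f3 r w) r w))"
    by (simp add: fun_eq_iff Gexp_def f1_def f2_def f3_def)
  then have "Iop a c (Gexp a c C \<sigma> \<tau> p0 j) s t
      = C ^ j * Iop a c (\<lambda>r w. (\<lambda>r w. f1 r w + f2 r w) r w - (\<lambda>r w. p0 * f3 r w) r w) s t"
    by (simp only: Iop_cmult)
  also have "\<dots> = C ^ j * (Iop a c (\<lambda>r w. f1 r w + f2 r w) s t - Iop a c (\<lambda>r w. p0 * f3 r w) s t)"
    by (subst Iop_diff[OF cont2_add[OF c1 c2] cont2_cmult[OF c3] s t]) (rule refl)
  also have "\<dots> = C ^ j * (Iop a c f1 s t + Iop a c f2 s t - p0 * Iop a c f3 s t)"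
    by (simp only: Iop_add[OF c1 c2 s t] Iop_cmult)
  also have "\<dots> = C ^ j * (Jit a \<sigma> (Suc j) s * Jit c (\<lambda>_. 1) (Suc j) t + Jit a (\<lambda>_. 1) (Suc j) s * Jit c \<tau> (Suc j) t
      - p0 * (Jit a (\<lambda>_. 1) (Suc j) s * Jit c (\<lambda>_. 1) (Suc j) t))"
    unfolding f1_def[abs_def] f2_def[abs_def] f3_def[abs_def] Iop_sep by simp
  finally show ?thesis by (simp add: Gexp_def)
qed

lemma picard:
  assumes ab: "a \<le> b" and cd: "c \<le> d"
    and sc: "continuous_on {a..b} \<sigma>" and tc: "continuous_on {c..d} \<tau>"
    and sa: "\<sigma> a = p0" and gs: "goursat_solution a b c d C \<sigma> \<tau> k"
    and s: "s \<in> {a..b}" and t: "t \<in> {c..d}"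
  shows "(\<lambda>j. Gexp a c C \<sigma> \<tau> p0 j s t) sums k s t"
proof -
  let ?G = "Gexp a c C \<sigma> \<tau> p0"
  have kc: "cont2 a b c d k" using gs by (simp add: goursat_solution_def cont2_def)
  have keq: "k s t = ?G 0 s t + C * Iop a c k s t" if "s \<in> {a..b}" "t \<in> {c..d}" for s t
    using gs that sa by (simp add: goursat_solution_def Gexp_def Iop_def)
  define E where "E N r w = k r w - (\<Sum>j<N. ?G j r w)" for N r w
  have Gc: "\<And>j. cont2 a b c d (?G j)" by (rule Gexp_cont[OF sc tc])
  have Ec: "cont2 a b c d (E N)" for N
    unfolding E_def[abs_def] by (intro cont2_diff kc cont2_sum Gc)
  have rec: "E (Suc N) s t = C * Iop a c (E N) s t" if s: "s \<in> {a..b}" and t: "t \<in> {c..d}" for N s t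
  proof -
    have "Iop a c (E N) s t = Iop a c k s t - Iop a c (\<lambda>r w. \<Sum>j<N. ?G j r w) s t"
      unfolding E_def[abs_def] by (rule Iop_diff[OF kc cont2_sum[OF Gc] s t])
    also have "\<dots> = Iop a c k s t - (\<Sum>j<N. Iop a c (?G j) s t)"
      by (subst Iop_sum[OF Gc _ s t]) auto
    finally have "C * Iop a c (E N) s t = C * Iop a c k s t - (\<Sum>j<N. C * Iop a c (?G j) s t)"
      by (metis right_diff_distrib sum_distrib_left)
    also have "\<dots> = C * Iop a c k s t - (\<Sum>j<N. ?G (Suc j) s t)"
      by (simp only: Gexp_step[OF sc tc s t])
    also have "\<dots> = E (Suc N) s t"
      unfolding E_def sum.lessThan_Suc_shift using keq[OF s t] by simp
    finally show ?thesis by simp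
  qed
  have "compact ((\<lambda>x. k (fst x) (snd x)) ` ({a..b} \<times> {c..d}))"
    by (rule compact_continuous_image) (use kc in \<open>auto simp: cont2_def intro: compact_Times\<close>)
  then obtain Mk where Mk: "\<And>x. x \<in> {a..b} \<times> {c..d} \<Longrightarrow> norm (k (fst x) (snd x)) \<le> Mk"
    by (meson bounded_iff compact_imp_bounded image_eqI)
  have Mk0: "Mk \<ge> 0" using Mk[of "(a, c)"] ab cd by auto
  have EB: "\<forall>r\<in>{a..b}. \<forall>w\<in>{c..d}. \<bar>E N r w\<bar> \<le> (Mk * \<bar>C\<bar> ^ N / (fact N)^2) * ((r - a) ^ N * (w - c) ^ N)" for N
  proof (induction N)
    case 0 then show ?case using Mk by (auto simp: E_def)
  next
    case (Suc N)
    show ?case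
    proof (intro ballI)
      fix r w assume r: "r \<in> {a..b}" and w: "w \<in> {c..d}"
      have "\<bar>E (Suc N) r w\<bar> = \<bar>C\<bar> * \<bar>Iop a c (E N) r w\<bar>" by (simp add: rec[OF r w] abs_mult)
      also have "\<dots> \<le> \<bar>C\<bar> * ((Mk * \<bar>C\<bar> ^ N / (fact N)^2) * ((r - a) ^ Suc N * (w - c) ^ Suc N) / (real (Suc N))^2)"
        by (intro mult_left_mono Iop_bound[OF Ec r w]) (use Suc.IH in auto)
      also have "\<dots> = (Mk * \<bar>C\<bar> ^ Suc N / (fact (Suc N))^2) * ((r - a) ^ Suc N * (w - c) ^ Suc N)"
        by (simp add: fact_Suc power2_eq_square field_simps)
      finally show "\<bar>E (Suc N) r w\<bar> \<le> (Mk * \<bar>C\<bar> ^ Suc N / (fact (Suc N))^2) * ((r - a) ^ Suc N * (w - c) ^ Suc N)" .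
    qed
  qed
  define z where "z = \<bar>C\<bar> * (s - a) * (t - c)"
  have z0: "z \<ge> 0" using s t by (simp add: z_def)
  have Ebound: "norm (E N s t) \<le> Mk * (inverse (fact N) * z ^ N)" for N
  proof -
    have "norm (E N s t) \<le> (Mk * \<bar>C\<bar> ^ N / (fact N)^2) * ((s - a) ^ N * (t - c) ^ N)"
      using EB[of N] s t by auto
    also have "\<dots> = Mk * (inverse (fact N) * z ^ N) / fact N"
    proof -
      have "z ^ N = \<bar>C\<bar> ^ N * ((s - a) ^ N * (t - c) ^ N)" by (simp add: z_def power_mult_distrib)
      then show ?thesis by (simp add: power2_eq_square field_simps)
    qed
    also have "\<dots> \<le> Mk * (inverse (fact N) * z ^ N)"
    proof -
      have f1: "(1::real) \<le> fact N" by (rule fact_ge_1)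
      have x0: "0 \<le> Mk * (inverse (fact N) * z ^ N)" using Mk0 z0 by simp
      show ?thesis using divide_left_mono[OF f1 x0] by simp
    qed
    finally show ?thesis .
  qed
  have "(\<lambda>N. inverse (fact N) * z ^ N) \<longlonglongrightarrow> 0"
    by (rule summable_LIMSEQ_zero[OF summable_exp])
  then have "(\<lambda>N. Mk * (inverse (fact N) * z ^ N)) \<longlonglongrightarrow> 0"
    by (rule tendsto_mult_right_zero)
  then have "(\<lambda>N. E N s t) \<longlonglongrightarrow> 0"
    by (rule Lim_null_comparison[OF always_eventually[OF allI[OF Ebound]]])
  then have "(\<lambda>N. k s t - E N s t) \<longlonglongrightarrow> k s t - 0"
    by (intro tendsto_diff tendsto_const)
  then have "(\<lambda>N. \<Sum>j<N. Gexp a c C \<sigma> \<tau> p0 j s t) \<longlonglongrightarrow> k s t"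
    unfolding E_def by simp
  then show ?thesis unfolding sums_def .
qed


theorem mainTheorem1:
  fixes a b c d C :: real and p q :: "nat \<Rightarrow> real"
    and \<sigma> \<tau> :: "real \<Rightarrow> real" and k :: "real \<Rightarrow> real \<Rightarrow> real"
  assumes "a < b" and "c < d" and "C \<noteq> 0"
    and "p 0 = q 0"
    and "uniform_limit {a..b} (\<lambda>N s. \<Sum>n<N. p n * (s - a) ^ n) \<sigma> sequentially"
    and "uniform_limit {c..d} (\<lambda>N t. \<Sum>n<N. q n * (t - c) ^ n) \<tau> sequentially"
    and "goursat_solution a b c d C \<sigma> \<tau> k"
  shows "(\<forall>s\<in>{a..b}. (\<lambda>n. goursat_coeff C (d - c) p q n * (s - a) ^ n) sums k s d) \<and>
         (\<forall>t\<in>{c..d}. (\<lambda>n. goursat_coeff C (b - a) q p n * (t - c) ^ n) sums k b t)"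
proof -
  note ab = \<open>a < b\<close> and cd = \<open>c < d\<close> and pq = \<open>p 0 = q 0\<close>
  note us = \<open>uniform_limit {a..b} (\<lambda>N s. \<Sum>n<N. p n * (s - a) ^ n) \<sigma> sequentially\<close>
  note ut = \<open>uniform_limit {c..d} (\<lambda>N t. \<Sum>n<N. q n * (t - c) ^ n) \<tau> sequentially\<close>
  note gs = \<open>goursat_solution a b c d C \<sigma> \<tau> k\<close>
  have sc: "continuous_on {a..b} \<sigma>"
    by (rule uniform_limit_theorem[OF always_eventually us]) (auto intro!: continuous_intros)
  have tc: "continuous_on {c..d} \<tau>"
    by (rule uniform_limit_theorem[OF always_eventually ut]) (auto intro!: continuous_intros)
  have sa: "\<sigma> a = p 0"
  proof -
    have "(\<lambda>n. p n * (a - a) ^ n) sums \<sigma> a"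
      unfolding sums_def using tendsto_uniform_limitI[OF us, of a] ab by auto
    then show ?thesis using powser_sums_zero[of p] by (simp add: sums_unique2)
  qed
  have tcq: "\<tau> c = q 0"
  proof -
    have "(\<lambda>n. q n * (c - c) ^ n) sums \<tau> c"
      unfolding sums_def using tendsto_uniform_limitI[OF ut, of c] cd by auto
    then show ?thesis using powser_sums_zero[of q] by (simp add: sums_unique2)
  qed
  have JS: "(\<lambda>m. p m * fact m / fact (m + j) * (s - a) ^ (m + j)) sums Jit a \<sigma> j s" if "s \<in> {a..b}" for j s
    unfolding sums_def using tendsto_uniform_limitI[OF Jit_series[OF _ us] that] ab by auto
  have JT: "(\<lambda>m. q m * fact m / fact (m + j) * (t - c) ^ (m + j)) sums Jit c \<tau> j t" if "t \<in> {c..d}" for j t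
    unfolding sums_def using tendsto_uniform_limitI[OF Jit_series[OF _ ut] that] cd by auto
  have P: "(\<lambda>j. Gexp a c C \<sigma> \<tau> (p 0) j s t) sums k s t" if "s \<in> {a..b}" "t \<in> {c..d}" for s t
    by (rule picard[OF _ _ sc tc sa gs that]) (use ab cd in auto)
  have part1: "(\<lambda>n. goursat_coeff C (d - c) p q n * (s - a) ^ n) sums k s d" if s: "s \<in> {a..b}" for s
  proof (rule endpoint[where p=p and q=q, OF pq])
    show "\<And>j. (\<lambda>m. p m * fact m / fact (m + j) * (s - a) ^ (m + j)) sums Jit a \<sigma> j s"
      by (rule JS[OF s])
    show "\<And>j. (\<lambda>l. q l * fact l / fact (l + j) * (d - c) ^ (l + j)) sums Jit c \<tau> j d"
      by (rule JT) (use cd in auto)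
    have "Gexp a c C \<sigma> \<tau> (p 0) j s d = C ^ j * (Jit a \<sigma> j s * ((d - c) ^ j / fact j) + (s - a) ^ j / fact j * Jit c \<tau> j d
                 - p 0 * ((s - a) ^ j / fact j) * ((d - c) ^ j / fact j))" for j
      using s cd by (simp add: Gexp_def Jit_one mult.assoc)
    then show "(\<lambda>j. C ^ j * (Jit a \<sigma> j s * ((d - c) ^ j / fact j) + (s - a) ^ j / fact j * Jit c \<tau> j d
                 - p 0 * ((s - a) ^ j / fact j) * ((d - c) ^ j / fact j))) sums k s d"
      using P[OF s, of d] cd by simp
  qed
  have part2: "(\<lambda>n. goursat_coeff C (b - a) q p n * (t - c) ^ n) sums k b t" if t: "t \<in> {c..d}" for t
  proof (rule endpoint[where p=q and q=p, OF pq[symmetric]])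
    show "\<And>j. (\<lambda>m. q m * fact m / fact (m + j) * (t - c) ^ (m + j)) sums Jit c \<tau> j t"
      by (rule JT[OF t])
    show "\<And>j. (\<lambda>l. p l * fact l / fact (l + j) * (b - a) ^ (l + j)) sums Jit a \<sigma> j b"
      by (rule JS) (use ab in auto)
    have "Gexp a c C \<sigma> \<tau> (p 0) j b t = C ^ j * (Jit c \<tau> j t * ((b - a) ^ j / fact j) + (t - c) ^ j / fact j * Jit a \<sigma> j b
                 - q 0 * ((t - c) ^ j / fact j) * ((b - a) ^ j / fact j))" for j
      using t ab pq by (simp add: Gexp_def Jit_one mult_ac)
    then show "(\<lambda>j. C ^ j * (Jit c \<tau> j t * ((b - a) ^ j / fact j) + (t - c) ^ j / fact j * Jit a \<sigma> j b
                 - q 0 * ((t - c) ^ j / fact j) * ((b - a) ^ j / fact j))) sums k b t"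
      using P[OF _ t, of b] ab by simp
  qed
  show ?thesis using part1 part2 by blast
qed

end
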